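(* Let $V$ be an $\mathcal{L}[\frac12]$-module on which $c$ acts as $0$, with a basis $\{x_k\mid k\in\frac12\mathbb{Z}\}$ and constants $a,b\in\mathbb{C}$, $f_{p,k},g_{n,k}\in\mathbb{C}$ such that for all $p\in\frac12+\mathbb{Z}$, $n\in\mathbb{Z}$, $k\in\frac12\mathbb{Z}$: $Y_px_k=f_{p,k}x_{k+p}$, $M_nx_k=g_{n,k}x_{k+n}$, $L_nx_k=(a+k+bn)x_{k+n}$ if $k\in\mathbb{Z}$ and $L_nx_k=(a+k+(b+\frac12)n)x_{k+n}$ if $k\in\frac12+\mathbb{Z}$. Then for all $k,j\in\mathbb{Z}$ and $n,p\in\frac12+\mathbb{Z}$, $$(a+k+2bn)f_{p,j}=(a+j+2bp)f_{n,k},$$ and there exists $f_0\in\mathbb{C}$ such that $f_{p,j}=(a+j+2bp)f_0$ for all $j\in\mathbb{Z}$, $p\in\frac12+\mathbb{Z}$.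
   Context: $\mathcal{L}[\frac12]$ is the complex Lie algebra with basis $\{L_m,Y_p,M_n,c\mid m,n\in\mathbb{Z},\ p\in\frac12+\mathbb{Z}\}$ and brackets $[L_m,L_{m'}]=(m'-m)L_{m+m'}+\delta_{m,-m'}\frac{m^3-m}{12}c$, $[L_m,Y_p]=(p-\frac m2)Y_{p+m}$, $[L_m,M_n]=nM_{n+m}$, $[Y_p,Y_{p'}]=(p'-p)M_{p+p'}$, $[Y_p,M_n]=[M_n,M_{n'}]=0$, $c$ central. *)

theory Defs
  imports Complex_Main
begin

definition halfZ :: "rat set" where "halfZ = {k. 2 * k \<in> \<int>}"
definition halfodd :: "rat set" where "halfodd = {p. p - 1/2 \<in> \<int>}"

text \<open>A representation of the Lie algebra L[1/2] on the complex vector space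
  (V, sc) in which the central element c acts as 0. The operators are indexed by
  rationals: L m, M n for m, n in Z and Y p for p in 1/2 + Z.\<close>
definition L_half_module_c0 ::
  "(complex \<Rightarrow> 'v::ab_group_add \<Rightarrow> 'v) \<Rightarrow> (rat \<Rightarrow> 'v \<Rightarrow> 'v) \<Rightarrow> (rat \<Rightarrow> 'v \<Rightarrow> 'v)
     \<Rightarrow> (rat \<Rightarrow> 'v \<Rightarrow> 'v) \<Rightarrow> bool" where
  "L_half_module_c0 sc L Y M \<longleftrightarrow>
     vector_space sc \<and>
     (\<forall>m\<in>\<int>. Vector_Spaces.linear sc sc (L m)) \<and>
     (\<forall>p\<in>halfodd. Vector_Spaces.linear sc sc (Y p)) \<and>
     (\<forall>n\<in>\<int>. Vector_Spaces.linear sc sc (M n)) \<and>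
     (\<forall>m\<in>\<int>. \<forall>m'\<in>\<int>. \<forall>v.
        L m (L m' v) - L m' (L m v) = sc (of_rat (m' - m)) (L (m + m') v)) \<and>
     (\<forall>m\<in>\<int>. \<forall>p\<in>halfodd. \<forall>v.
        L m (Y p v) - Y p (L m v) = sc (of_rat (p - m / 2)) (Y (p + m) v)) \<and>
     (\<forall>m\<in>\<int>. \<forall>n\<in>\<int>. \<forall>v.
        L m (M n v) - M n (L m v) = sc (of_rat n) (M (n + m) v)) \<and>
     (\<forall>p\<in>halfodd. \<forall>p'\<in>halfodd. \<forall>v.
        Y p (Y p' v) - Y p' (Y p v) = sc (of_rat (p' - p)) (M (p + p') v)) \<and>
     (\<forall>p\<in>halfodd. \<forall>n\<in>\<int>. \<forall>v. Y p (M n v) = M n (Y p v)) \<and>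
     (\<forall>n\<in>\<int>. \<forall>n'\<in>\<int>. \<forall>v. M n (M n' v) = M n' (M n v))"

end

theory Submission
  imports Defs
begin


definition cc :: "complex \<Rightarrow> complex \<Rightarrow> int \<Rightarrow> int \<Rightarrow> complex" where
  "cc a b i j = a + of_int j + b * (2 * of_int i + 1)"

definition solE :: "complex \<Rightarrow> complex \<Rightarrow> (int \<Rightarrow> int \<Rightarrow> complex) \<Rightarrow> bool" where
  "solE a b H \<longleftrightarrow> (\<forall>i j m. H i j * (a + of_int j + of_int i + 1/2 + (b + 1/2) * of_int m)
      - (a + of_int j + b * of_int m) * H i (j+m) = (of_int i + 1/2 - of_int m / 2) * H (i+m) j)"

lemma solE_D: "solE a b H \<Longrightarrow> H i j * (a + of_int j + of_int i + 1/2 + (b + 1/2) * of_int m)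
      - (a + of_int j + b * of_int m) * H i (j+m) = (of_int i + 1/2 - of_int m / 2) * H (i+m) j"
  unfolding solE_def by blast

lemma solE_lin:
  assumes "solE a b H"
  shows "solE a b (\<lambda>i j. H i j - l * cc a b i j)"
  unfolding solE_def
proof (intro allI)
  fix i j m
  have e: "H i j * (a + of_int j + of_int i + 1/2 + (b + 1/2) * of_int m)
      - (a + of_int j + b * of_int m) * H i (j+m) = (of_int i + 1/2 - of_int m / 2) * H (i+m) j"
    using solE_D[OF assms] .
  show "(H i j - l * cc a b i j) * (a + of_int j + of_int i + 1/2 + (b + 1/2) * of_int m)
      - (a + of_int j + b * of_int m) * (H i (j+m) - l * cc a b i (j+m))
      = (of_int i + 1/2 - of_int m / 2) * (H (i+m) j - l * cc a b (i+m) j)"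
    using e unfolding cc_def by (simp add: algebra_simps)
qed

lemma R1:
  assumes "solE a b H"
  shows "(a + of_int j + b + 1) * H 0 j = (a + of_int j + b) * H 0 (j+1)"
  using solE_D[OF assms, of 0 j 1] by (simp add: algebra_simps)

lemma R1m:
  assumes "solE a b H"
  shows "(a + of_int j - b - 1) * H (-1) j = (a + of_int j - b) * H (-1) (j-1)"
  using solE_D[OF assms, of "-1" j "-1"] by (simp add: algebra_simps)

lemma R2:
  assumes "solE a b H"
  shows "(a + of_int j - b) * H 0 j = (a + of_int j + b) * H (-1) j"
proof -
  have e1: "(a + of_int j - b) * (H 0 j - H 0 (j-1)) = H (-1) j"
    using solE_D[OF assms, of 0 j "-1"] by (simp add: algebra_simps)
  have e2: "(a + of_int (j-1) + b + 1) * H 0 (j-1) = (a + of_int (j-1) + b) * H 0 j"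
    using R1[OF assms, of "j-1"] by simp
  show ?thesis using e1 e2 by (simp add: algebra_simps) algebra
qed

lemma fill0:
  assumes "solE a b H" "\<And>j. H i0 j = 0" "i \<noteq> 3*i0+1"
  shows "H i j = 0"
proof -
  have "(of_int i0 + 1/2 - of_int (i-i0) / 2) * H i j = 0"
    using solE_D[OF assms(1), of i0 j "i-i0"] assms(2) by simp
  moreover have "(of_int i0 + 1/2 - of_int (i-i0) / 2 :: complex) \<noteq> 0"
  proof
    assume "(of_int i0 + 1/2 - of_int (i-i0) / 2 :: complex) = 0"
    hence "(of_int (2 + i0*6) :: complex) = of_int (i*2)" by (simp add: field_simps)
    hence "2 + i0*6 = i*2" by (simp only: of_int_eq_iff)
    thus False using assms(3) by simp
  qed
  ultimately show ?thesis by simp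
qed

lemma fill:
  assumes "solE a b H" "\<And>j. H i0 j = 0"
  shows "H i j = 0"
proof (cases "i = 3*i0+1")
  case False thus ?thesis using fill0[OF assms] by blast
next
  case True
  have r: "\<And>j. H (-i0-1) j = 0" by (rule fill0[OF assms]) presburger
  show ?thesis by (rule fill0[OF assms(1) r]) (use True in presburger)
qed



lemma solE_z:
  assumes "solE a b H" "a = - of_int z - b"
  shows "H i (z+k) * (of_int k - b + of_int i + 1/2 + (b+1/2)*of_int m) - (of_int k - b + b*of_int m) * H i (z+(k+m))
     = (of_int i + 1/2 - of_int m/2) * H (i+m) (z+k)"
  using solE_D[OF assms(1), of i "z+k" m] assms(2) by (simp add: algebra_simps)

lemma cert_b0:
  assumes s: "solE a b H" and ha: "a = - of_int z - b" and hb: "b = 0"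
    and z1: "H 0 (z+1) = 0" and z3: "H 0 (z+3) = 0"
  shows "H 0 (z-1) = 0"
proof -
  note E = solE_z[OF s ha, unfolded hb]
  note e1 = E[of 0 1 2, simplified]
  note e2 = E[of 1 "-1" "-1", simplified]
  note e3 = E[of 2 "-2" "-1", simplified]
  note e4 = E[of 2 "-1" "-2", simplified]
  note e5 = E[of 2 "1" "-2", simplified]
  show ?thesis using e1 e2 e3 e4 e5 z1 z3 by algebra
qed

lemma cert_bp:
  assumes s: "solE a b H" and ha: "a = - of_int z - b" and hb: "b = 1/2"
    and z0: "H 0 z = 0" and z1: "H 0 (z+1) = 0" and z2: "H 0 (z+2) = 0"
  shows "H 0 (z-1) = 0"
proof -
  note E = solE_z[OF s ha, unfolded hb]
  note e1 = E[of 0 "-1" 2, simplified]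
  note e2 = E[of 0 0 2, simplified]
  note e3 = E[of 2 "-1" 1, simplified]
  note e4 = E[of 2 0 1, simplified]
  note e5 = E[of 3 0 "-1", simplified]
  show ?thesis using e1 e2 e3 e4 e5 z0 z1 z2 by algebra
qed

lemma cert_bm:
  assumes s: "solE a b H" and ha: "a = - of_int z - b" and hb: "b = -1/2"
    and z0: "H 0 z = 0" and z1: "H 0 (z+1) = 0"
  shows "H 0 (z-1) = 0"
proof -
  note E = solE_z[OF s ha, unfolded hb]
  note e1 = E[of "-1" "-1" 2, simplified]
  note e2 = E[of 0 "-1" "-1", simplified]
  note e3 = E[of 0 1 "-1", simplified]
  note e4 = E[of 1 "-1" "-1", simplified]
  show ?thesis using e1 e2 e3 e4 z0 z1 by algebra
qed


lemma row0_up: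
  fixes D :: "int \<Rightarrow> complex"
  assumes R: "\<And>j. (a + of_int j + b + 1) * D j = (a + of_int j + b) * D (j+1)"
    and nz: "\<And>j. j \<ge> k \<Longrightarrow> a + of_int j + b \<noteq> 0" and base: "D k = 0" and le: "k \<le> i"
  shows "D i = 0"
  using le
proof (induction i rule: int_ge_induct)
  case base show ?case by (rule assms(3))
next
  case (step i)
  have "(a + of_int i + b) * D (i+1) = 0" using R[of i] step.IH by simp
  thus ?case using nz[OF step.hyps] by simp
qed

lemma row0_down:
  fixes D :: "int \<Rightarrow> complex"
  assumes R: "\<And>j. (a + of_int j + b + 1) * D j = (a + of_int j + b) * D (j+1)"
    and nz: "\<And>j. j \<le> k \<Longrightarrow> a + of_int j + b \<noteq> 0" and base: "D k = 0" and le: "i \<le> k"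
  shows "D i = 0"
  using le
proof (induction i rule: int_le_induct)
  case base show ?case by (rule assms(3))
next
  case (step i)
  have e: "a + of_int (i-1) + b + 1 = a + of_int i + b" by simp
  have "(a + of_int i + b) * D (i-1) = 0" using R[of "i-1", unfolded e] step.IH by simp
  thus ?case using nz[OF step.hyps(1)] by simp
qed

lemma rowm_up:
  fixes D :: "int \<Rightarrow> complex"
  assumes R: "\<And>j. (a + of_int j - b - 1) * D j = (a + of_int j - b) * D (j-1)"
    and nz: "\<And>j. j \<ge> k \<Longrightarrow> a + of_int j - b \<noteq> 0" and base: "D k = 0" and le: "k \<le> i"
  shows "D i = 0"
  using le
proof (induction i rule: int_ge_induct)
  case base show ?case by (rule assms(3))
next
  case (step i)
  have e: "a + of_int (i+1) - b - 1 = a + of_int i - b" by simp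
  have "(a + of_int i - b) * D (i+1) = 0" using R[of "i+1", unfolded e] step.IH by simp
  thus ?case using nz[OF step.hyps(1)] by simp
qed

lemma rowm_down:
  fixes D :: "int \<Rightarrow> complex"
  assumes R: "\<And>j. (a + of_int j - b - 1) * D j = (a + of_int j - b) * D (j-1)"
    and nz: "\<And>j. j \<le> k \<Longrightarrow> a + of_int j - b \<noteq> 0" and base: "D k = 0" and le: "i \<le> k"
  shows "D i = 0"
  using le
proof (induction i rule: int_le_induct)
  case base show ?case by (rule assms(3))
next
  case (step i)
  have "(a + of_int i - b) * D (i-1) = 0" using R[of "i"] step.IH by simp
  thus ?case using nz[OF step.hyps(1)] by simp
qed

lemma main_alg:
  assumes s: "solE a b G"
  shows "\<exists>l. \<forall>i j. G i j = l * cc a b i j"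
proof -
  have key: "\<forall>i j. G i j = l * cc a b i j" if row: "\<And>j. G i0 j - l * cc a b i0 j = 0" for l i0
  proof (intro allI)
    fix i j
    have "(\<lambda>i j. G i j - l * cc a b i j) i j = 0"
      by (rule fill[OF solE_lin[OF s], of i0]) (use row in simp)
    thus "G i j = l * cc a b i j" by simp
  qed
  show ?thesis
  proof (cases "\<forall>j::int. a + of_int j + b \<noteq> 0")
    case A: True
    define l where "l = G 0 0 / (a + b)"
    define H where "H = (\<lambda>i j. G i j - l * cc a b i j)"
    have sH: "solE a b H" unfolding H_def by (rule solE_lin[OF s])
    have nz0: "a + b \<noteq> 0" using A[rule_format, of 0] by simp
    have H00: "H 0 0 = 0" unfolding H_def l_def cc_def using nz0 by simp
    have "H 0 j = 0" for j
    proof (cases "j \<ge> 0")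
      case True
      show ?thesis by (rule row0_up[of a b "H 0" 0]) (use R1[OF sH] A H00 True in auto)
    next
      case False
      show ?thesis by (rule row0_down[of a b "H 0" 0]) (use R1[OF sH] A H00 False in auto)
    qed
    hence "\<forall>i j. G i j = l * cc a b i j" by (intro key[of 0]) (simp add: H_def)
    thus ?thesis by blast
  next
    case nA: False
    then obtain z where hz: "a + of_int z + b = 0" by blast
    show ?thesis
    proof (cases "\<forall>j::int. a + of_int j - b \<noteq> 0")
      case B: True
      define l where "l = G (-1) 0 / (a - b)"
      define H where "H = (\<lambda>i j. G i j - l * cc a b i j)"
      have sH: "solE a b H" unfolding H_def by (rule solE_lin[OF s])
      have nz0: "a - b \<noteq> 0" using B[rule_format, of 0] by simp
      have H00: "H (-1) 0 = 0" unfolding H_def l_def cc_def using nz0 by simp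
      have "H (-1) j = 0" for j
      proof (cases "j \<ge> 0")
        case True
        show ?thesis by (rule rowm_up[of a b "H (-1)" 0]) (use R1m[OF sH] B H00 True in auto)
      next
        case False
        show ?thesis by (rule rowm_down[of a b "H (-1)" 0]) (use R1m[OF sH] B H00 False in auto)
      qed
      hence "\<forall>i j. G i j = l * cc a b i j" by (intro key[of "-1"]) (simp add: H_def)
      thus ?thesis by blast
    next
      case nB: False
      then obtain z' where hz': "a + of_int z' - b = 0" by blast
      define l where "l = G 0 (z+1)"
      define H where "H = (\<lambda>i j. G i j - l * cc a b i j)"
      have sH: "solE a b H" unfolding H_def by (rule solE_lin[OF s])
      have c0: "a + of_int j + b = of_int (j - z)" for j using hz
        by (simp add: algebra_simps)
      have cm: "a + of_int j - b = of_int (j - z')" for j using hz'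
        by (simp add: algebra_simps)
      have nzc: "a + of_int j + b \<noteq> 0" if "j \<noteq> z" for j
      proof
        assume "a + of_int j + b = 0"
        hence "(of_int (j - z)::complex) = 0" using c0[of j] by metis
        hence "j - z = 0" by (simp only: of_int_eq_0_iff)
        thus False using that by simp
      qed
      have ha: "a = - of_int z - b" using hz by (simp add: algebra_simps eq_neg_iff_add_eq_0)
      have Hz1: "H 0 (z+1) = 0" unfolding H_def l_def cc_def using c0[of "z+1"] by simp
      have Hz: "H 0 z = 0" using R1[OF sH, of z] Hz1 c0[of z] c0[of "z+1"] by simp
      have up: "H 0 j = 0" if "j \<ge> z+1" for j
        by (rule row0_up[of a b "H 0" "z+1"]) (use R1[OF sH] nzc Hz1 that in auto)
      have Hzm1: "H 0 (z-1) = 0"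
      proof -
        have bz: "2 * b = of_int (z' - z)" using hz hz' by (simp add: algebra_simps) algebra
        consider "z' = z" | "z' = z + 1" | "z' = z - 1" | "z' \<noteq> z \<and> z' \<noteq> z+1 \<and> z' \<noteq> z - 1" by blast
        thus ?thesis
        proof cases
          case 1
          hence hb: "b = 0" using bz by simp
          show ?thesis by (rule cert_b0[OF sH ha hb]) (use Hz1 up in auto)
        next
          case 2
          hence hb: "b = 1/2" using bz by (simp add: field_simps)
          show ?thesis by (rule cert_bp[OF sH ha hb]) (use Hz Hz1 up in auto)
        next
          case 3
          hence t: "z' - z = -1" by simp
          have "2 * b = -1" using bz unfolding t by simp
          hence hb: "b = -1/2" by (simp add: field_simps)
          show ?thesis by (rule cert_bm[OF sH ha hb]) (use Hz Hz1 in auto)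
        next
          case 4
          have cmnz: "a + of_int j - b \<noteq> 0" if "j \<noteq> z'" for j
          proof
            assume "a + of_int j - b = 0"
            hence "(of_int (j - z')::complex) = 0" using cm[of j] by metis
            hence "j - z' = 0" by (simp only: of_int_eq_0_iff)
            thus False using that by simp
          qed
          have e1: "a + of_int (z+1) + b = 1" using c0[of "z+1"] by simp
          have a1: "H (-1) (z+1) = 0" using R2[OF sH, of "z+1", unfolded e1] Hz1 by simp
          have "(a + of_int (z+1) - b) * H (-1) z = 0" using R1m[OF sH, of "z+1"] a1 by simp
          hence a2: "H (-1) z = 0" using cmnz[of "z+1"] 4 by simp
          have "(a + of_int z - b) * H (-1) (z-1) = 0" using R1m[OF sH, of "z"] a2 by simp
          hence a3: "H (-1) (z-1) = 0" using cmnz[of "z"] 4 by simp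
          have "(a + of_int (z-1) - b) * H 0 (z-1) = 0" using R2[OF sH, of "z-1"] a3 by simp
          thus ?thesis using cmnz[of "z-1"] 4 by simp
        qed
      qed
      have "H 0 j = 0" for j
      proof -
        consider "j \<ge> z+1" | "j = z" | "j \<le> z - 1" by linarith
        thus ?thesis
        proof cases
          case 1 thus ?thesis by (rule up)
        next
          case 2 thus ?thesis using Hz by simp
        next
          case 3
          show ?thesis by (rule row0_down[of a b "H 0" "z-1"]) (use R1[OF sH] nzc Hzm1 3 in auto)
        qed
      qed
      hence "\<forall>i j. G i j = l * cc a b i j" by (intro key[of 0]) (simp add: H_def)
      thus ?thesis by blast
    qed
  qed
qed



lemma lin_scale: "Vector_Spaces.linear s s f \<Longrightarrow> f (s r v) = s r (f v)"
  by (simp add: module_hom_iff_linear[symmetric] module_hom.scale)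

lemma halfodd_int: "p \<in> halfodd \<Longrightarrow> \<exists>i::int. p = of_int i + 1/2"
  unfolding halfodd_def by (auto elim!: Ints_cases) (metis add.commute diff_add_cancel)

lemma halfodd_intI: "of_int i + 1/2 \<in> halfodd"
  unfolding halfodd_def by simp

lemma int_halfZ: "(k::rat) \<in> \<int> \<Longrightarrow> k \<in> halfZ"
  unfolding halfZ_def by simp

lemma halfodd_halfZ:
  assumes "p \<in> halfodd" shows "p \<in> halfZ"
proof -
  from assms obtain n where "p - 1/2 = of_int n" unfolding halfodd_def by (auto elim: Ints_cases)
  hence "2 * p = of_int (2*n+1)" by (simp add: field_simps)
  thus ?thesis unfolding halfZ_def by (metis Ints_of_int mem_Collect_eq)
qed

lemma halfodd_add_int:
  assumes "p \<in> halfodd" "(m::rat) \<in> \<int>" shows "p + m \<in> halfodd"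
proof -
  have "p - 1/2 \<in> \<int>" using assms(1) unfolding halfodd_def by simp
  hence "(p - 1/2) + m \<in> \<int>" using assms(2) by (rule Ints_add)
  thus ?thesis unfolding halfodd_def by (simp add: algebra_simps)
qed

theorem lemma3p3:
  fixes sc :: "complex \<Rightarrow> 'v::ab_group_add \<Rightarrow> 'v"
    and L Y M :: "rat \<Rightarrow> 'v \<Rightarrow> 'v"
    and x :: "rat \<Rightarrow> 'v"
    and a b :: complex
    and f g :: "rat \<Rightarrow> rat \<Rightarrow> complex"
  assumes module: "L_half_module_c0 sc L Y M"
    and basis_inj: "inj_on x halfZ"
    and basis_indep: "\<not> module.dependent sc (x ` halfZ)"
    and basis_span: "module.span sc (x ` halfZ) = UNIV"
    and Y_act: "\<And>p k. p \<in> halfodd \<Longrightarrow> k \<in> halfZ \<Longrightarrow> Y p (x k) = sc (f p k) (x (k + p))"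
    and M_act: "\<And>n k. n \<in> \<int> \<Longrightarrow> k \<in> halfZ \<Longrightarrow> M n (x k) = sc (g n k) (x (k + n))"
    and L_act_int: "\<And>n k. n \<in> \<int> \<Longrightarrow> k \<in> \<int> \<Longrightarrow>
           L n (x k) = sc (a + of_rat k + b * of_rat n) (x (k + n))"
    and L_act_half: "\<And>n k. n \<in> \<int> \<Longrightarrow> k \<in> halfodd \<Longrightarrow>
           L n (x k) = sc (a + of_rat k + (b + 1/2) * of_rat n) (x (k + n))"
  shows "(\<forall>k\<in>\<int>. \<forall>j\<in>\<int>. \<forall>n\<in>halfodd. \<forall>p\<in>halfodd.
            (a + of_rat k + 2 * b * of_rat n) * f p j = (a + of_rat j + 2 * b * of_rat p) * f n k)
       \<and> (\<exists>f0. \<forall>j\<in>\<int>. \<forall>p\<in>halfodd. f p j = (a + of_rat j + 2 * b * of_rat p) * f0)"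
proof -
  note mm = module[unfolded L_half_module_c0_def]
  have vs: "vector_space sc" using mm by (rule conjunct1)
  have linL': "\<forall>m\<in>\<int>. Vector_Spaces.linear sc sc (L m)" using mm by (elim conjE)
  have linY': "\<forall>p\<in>halfodd. Vector_Spaces.linear sc sc (Y p)" using mm by (elim conjE)
  have LY': "\<forall>m\<in>\<int>. \<forall>p\<in>halfodd. \<forall>v.
        L m (Y p v) - Y p (L m v) = sc (of_rat (p - m / 2)) (Y (p + m) v)" using mm by (elim conjE)
  have linL: "\<And>m. m \<in> \<int> \<Longrightarrow> Vector_Spaces.linear sc sc (L m)" using linL' by blast
  have linY: "\<And>p. p \<in> halfodd \<Longrightarrow> Vector_Spaces.linear sc sc (Y p)" using linY' by blast
  have LY: "\<And>m p v. m \<in> \<int> \<Longrightarrow> p \<in> halfodd \<Longrightarrow>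
        L m (Y p v) - Y p (L m v) = sc (of_rat (p - m / 2)) (Y (p + m) v)" using LY' by blast
  have md: "module sc" using vs by (simp add: module_iff_vector_space)
  have xnz: "x k \<noteq> 0" if "k \<in> halfZ" for k
  proof
    assume "x k = 0"
    hence "0 \<in> x ` halfZ" using that by force
    thus False using basis_indep module.dependent_zero[OF md] by blast
  qed
  have Erat: "f p j * (a + of_rat (j+p) + (b+1/2) * of_rat m) - (a + of_rat j + b * of_rat m) * f p (j+m)
        = of_rat (p - m/2) * f (p+m) j"
    if hp: "p \<in> halfodd" and hj: "j \<in> \<int>" and hm: "m \<in> \<int>" for p j m
  proof -
    have jZ: "j \<in> halfZ" using hj by (rule int_halfZ)
    have jmZ: "j + m \<in> halfZ" using hj hm by (intro int_halfZ Ints_add)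
    have jp: "j + p \<in> halfodd" using halfodd_add_int[OF hp hj] by (simp add: add.commute)
    have pm: "p + m \<in> halfodd" using halfodd_add_int[OF hp hm] .
    define X where "X = x (j + p + m)"
    have X1: "x (j + p + m) = X" by (simp add: X_def)
    have X2: "x (j + m + p) = X" by (simp add: X_def algebra_simps)
    have X3: "x (j + (p + m)) = X" by (simp add: X_def algebra_simps)
    have Xnz: "X \<noteq> 0" unfolding X_def
      by (rule xnz) (use halfodd_halfZ[OF halfodd_add_int[OF jp hm]] in simp)
    have l1: "L m (Y p (x j)) = sc (f p j * (a + of_rat (j+p) + (b+1/2) * of_rat m)) X"
      using Y_act[OF hp jZ] lin_scale[OF linL[OF hm]] L_act_half[OF hm jp] X1
      module.scale_scale[OF md] by simp
    have l2: "Y p (L m (x j)) = sc ((a + of_rat j + b * of_rat m) * f p (j+m)) X"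
      using L_act_int[OF hm hj] lin_scale[OF linY[OF hp]] Y_act[OF hp jmZ] X2
      module.scale_scale[OF md] by (simp add: mult.commute)
    have l3: "sc (of_rat (p - m / 2)) (Y (p + m) (x j)) = sc (of_rat (p - m/2) * f (p+m) j) X"
      using Y_act[OF pm jZ] X3 module.scale_scale[OF md] by simp
    have "sc (f p j * (a + of_rat (j+p) + (b+1/2) * of_rat m) - (a + of_rat j + b * of_rat m) * f p (j+m)) X
       = sc (of_rat (p - m/2) * f (p+m) j) X"
      using LY[OF hm hp, of "x j"] l1 l2 l3 module.scale_left_diff_distrib[OF md] by simp
    thus ?thesis using Xnz vector_space.scale_cancel_right[OF vs] by blast
  qed
  define G where "G = (\<lambda>i j::int. f (of_int i + 1/2) (of_int j))"
  have sG: "solE a b G" unfolding solE_def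
  proof (intro allI)
    fix i j m :: int
    have e: "f (of_int i + 1/2) (of_int j) * (a + of_rat (of_int j + (of_int i + 1/2)) + (b+1/2) * of_rat (of_int m))
        - (a + of_rat (of_int j) + b * of_rat (of_int m)) * f (of_int i + 1/2) (of_int j + of_int m)
        = of_rat ((of_int i + 1/2) - of_int m/2) * f ((of_int i + 1/2) + of_int m) (of_int j)"
      by (rule Erat) (auto intro: halfodd_intI)
    have q1: "(of_int i + 1/2) + of_int m = (of_int (i+m) + 1/2 :: rat)" by simp
    have q2: "(of_int j + of_int m :: rat) = of_int (j+m)" by simp
    have q3: "(of_rat (of_int j + (of_int i + 1/2)) :: complex) = of_int j + of_int i + 1/2"
      by (simp add: of_rat_add of_rat_divide)
    have q4: "(of_rat ((of_int i + 1/2) - of_int m/2) :: complex) = of_int i + 1/2 - of_int m / 2"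
      by (simp add: of_rat_add of_rat_diff of_rat_divide)
    show "G i j * (a + of_int j + of_int i + 1/2 + (b + 1/2) * of_int m)
      - (a + of_int j + b * of_int m) * G i (j+m) = (of_int i + 1/2 - of_int m / 2) * G (i+m) j"
      using e unfolding q1 q2 q3 q4 G_def by (simp add: add.assoc)
  qed
  obtain l where hl: "\<And>i j. G i j = l * cc a b i j" using main_alg[OF sG] by blast
  have rep: "f p j = (a + of_rat j + 2 * b * of_rat p) * l" if hj0: "j \<in> \<int>" and hp0: "p \<in> halfodd" for j p
  proof -
    obtain i where hi: "p = of_int i + 1/2" using halfodd_int[OF hp0] by blast
    obtain jj where hj: "j = of_int jj" using hj0 by (auto elim: Ints_cases)
    have "f p j = G i jj" unfolding G_def hi hj ..
    also have "\<dots> = l * cc a b i jj" by (rule hl)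
    also have "\<dots> = (a + of_rat j + 2 * b * of_rat p) * l"
      unfolding cc_def hi hj by (simp add: of_rat_add of_rat_divide algebra_simps)
    finally show ?thesis .
  qed
  show ?thesis
  proof
    show "\<forall>k\<in>\<int>. \<forall>j\<in>\<int>. \<forall>n\<in>halfodd. \<forall>p\<in>halfodd.
            (a + of_rat k + 2 * b * of_rat n) * f p j = (a + of_rat j + 2 * b * of_rat p) * f n k"
      using rep by (simp add: algebra_simps)
    show "\<exists>f0. \<forall>j\<in>\<int>. \<forall>p\<in>halfodd. f p j = (a + of_rat j + 2 * b * of_rat p) * f0"
      using rep by blast
  qed
qed

end
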